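(* Under the hypotheses of the standing setting below, let $(u,v)$ be a bounded, decaying, optimal integrable positive solution. Then $u(x)\simeq|x|^{-\frac{n-\beta\gamma}{\gamma-1}}$.
   Context: Standing setting: $n\ge3$, $\beta>0$, $\gamma>1$, $\beta\gamma<n$, $p,q>0$ with $q\ge p$, $pq>(\gamma-1)^2$, $\sigma_1,\sigma_2\in(-\beta\gamma,\infty)$ with $\sigma_1\le\sigma_2$, $q_0+p_0\le\frac{n-\beta\gamma}{\gamma-1}$ where $q_0=\frac{\beta\gamma(\gamma-1+q)+(\gamma-1)\sigma_1+\sigma_2 q}{pq-(\gamma-1)^2}$, $p_0=\frac{\beta\gamma(\gamma-1+p)+(\gamma-1)\sigma_2+\sigma_1 p}{pq-(\gamma-1)^2}$; $c_1,c_2$ are double bounded (i.e. $1/C\le c_i(x)\le C$ for some $C>0$), and $(u,v)$ is a positive solution (nonnegative $L^1_{loc}$ functions, positive, satisfying the equations a.e.) of $u(x)=c_1(x)W_{\beta,\gamma}(|y|^{\sigma_1}v^q)(x)$, $v(x)=c_2(x)W_{\beta,\gamma}(|y|^{\sigma_2}u^p)(x)$, where $W_{\beta,\gamma}(f)(x)=\int_0^\infty\Big(\frac{\int_{B_t(x)}f(y)\,dy}{t^{n-\beta\gamma}}\Big)^{\frac{1}{\gamma-1}}\frac{dt}{t}$. For positive $f$, $f(x)\simeq g(x)$ means $1/c\le f(x)/g(x)\le c$ for some $c>0$ and all sufficiently large $|x|$; decaying means $u\simeq|x|^{-\theta_1}$, $v\simeq|x|^{-\theta_2}$ for some $\theta_1,\theta_2>0$.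 Optimal integrable means $(u,v)\in L^r\times L^s$ for all $r>\frac{n(\gamma-1)}{n-\beta\gamma}$ and $s>\max\big\{\frac{n(\gamma-1)}{n-\beta\gamma},\frac{n(\gamma-1)}{p\frac{n-\beta\gamma}{\gamma-1}-(\beta\gamma+\sigma_2)}\big\}$. *)

theory Defs
  imports "HOL-Analysis.Analysis"
begin

definition ball_int :: "((real^'n::finite) \<Rightarrow> real) \<Rightarrow> (real^'n) \<Rightarrow> real \<Rightarrow> ennreal"
  where "ball_int f x t = (\<integral>\<^sup>+ y. indicator (ball x t) y * ennreal (f y) \<partial>lborel)"

definition wolff :: "real \<Rightarrow> real \<Rightarrow> ((real^'n::finite) \<Rightarrow> real) \<Rightarrow> (real^'n) \<Rightarrow> ennreal"
  where "wolff \<beta> \<gamma> f x =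
    (\<integral>\<^sup>+ t. indicator {0<..} t *
       (if ball_int f x t = \<infinity> then \<infinity>
        else ennreal ((enn2real (ball_int f x t) / t powr (real CARD('n) - \<beta> * \<gamma>))
                        powr (1 / (\<gamma> - 1)) / t)) \<partial>lborel)"

definition double_bounded :: "('a \<Rightarrow> real) \<Rightarrow> bool"
  where "double_bounded c \<longleftrightarrow> (\<exists>C>0. \<forall>x. 1 / C \<le> c x \<and> c x \<le> C)"

definition asymp_equiv_large :: "((real^'n::finite) \<Rightarrow> real) \<Rightarrow> ((real^'n) \<Rightarrow> real) \<Rightarrow> bool"
  where "asymp_equiv_large f g \<longleftrightarrow>
    (\<exists>c>0. \<exists>R. \<forall>x. norm x \<ge> R \<longrightarrow> 1 / c \<le> f x / g x \<and> f x / g x \<le> c)"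

definition locally_L1 :: "((real^'n::finite) \<Rightarrow> real) \<Rightarrow> bool"
  where "locally_L1 f \<longleftrightarrow> f \<in> borel_measurable lborel \<and>
     (\<forall>K. compact K \<longrightarrow> set_integrable lborel K f)"

end

theory Submission
  imports Defs
begin

lemma annulus_int:
  fixes a :: real
  assumes a: "a > 0"
  shows "(\<integral>\<^sup>+ x. indicator (ball (0::'a::euclidean_space) (2*a) - ball 0 a) x * ennreal (norm x powr (- real DIM('a))) \<partial>lborel)
     \<ge> ennreal (unit_ball_vol (DIM('a)) * (1 - 1/2^DIM('a)))"
proof -
  define d where "d = DIM('a)"
  define V where "V = unit_ball_vol (DIM('a))"
  have V: "V > 0" unfolding V_def by simp
  have "(2*a) powr (- real d) * (V * (2*a)^d - V * a^d) = V * (1 - 1/2^d)"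
  proof -
    have "(2*a) powr (- real d) = 1 / (2*a)^d" using a by (simp add: powr_minus powr_realpow divide_inverse)
    then show ?thesis using a by (simp add: field_simps power_mult_distrib)
  qed
  then have "ennreal (V * (1 - 1/2^d)) = ennreal ((2*a) powr (- real d) * (V * (2*a)^d - V * a^d))" by simp
  also have "\<dots> = ennreal ((2*a) powr (- real d)) * ennreal (V * (2*a)^d - V * a^d)"
    using a V by (subst ennreal_mult[symmetric]) (auto intro!: mult_right_mono simp: algebra_simps power_mult_distrib)
  also have "ennreal (V * (2*a)^d - V * a^d) = ennreal (V * (2*a)^d) - ennreal (V * a^d)"
    using a V by (subst ennreal_minus) auto
  also have "\<dots> = emeasure lborel (ball (0::'a) (2*a) - ball 0 a)"
    using a by (subst emeasure_Diff) (auto simp: emeasure_ball V_def d_def emeasure_lborel_ball_finite)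
  also have "ennreal ((2*a) powr (- real d)) * \<dots> = (\<integral>\<^sup>+ x. ennreal ((2*a) powr (- real d)) * indicator (ball (0::'a) (2*a) - ball 0 a) x \<partial>lborel)"
    by (subst nn_integral_cmult_indicator) auto
  also have "\<dots> \<le> (\<integral>\<^sup>+ x. indicator (ball (0::'a) (2*a) - ball 0 a) x * ennreal (norm x powr (- real DIM('a))) \<partial>lborel)"
  proof (rule nn_integral_mono)
    fix x :: 'a
    show "ennreal ((2*a) powr (- real d)) * indicator (ball (0::'a) (2*a) - ball 0 a) x
        \<le> indicator (ball (0::'a) (2*a) - ball 0 a) x * ennreal (norm x powr (- real DIM('a)))"
    proof (cases "x \<in> ball (0::'a) (2*a) - ball 0 a")
      case True
      then have "norm x < 2*a" "norm x \<ge> a" by auto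
      then have "norm x powr (- real d) \<ge> (2*a) powr (- real d)"
        using a by (intro powr_mono2') auto
      then show ?thesis using True by (auto simp: d_def intro: ennreal_leI)
    qed auto
  qed
  finally show ?thesis by (simp add: V_def d_def)
qed

lemma annulus_sum:
  fixes R :: real
  assumes R: "R > 0"
  shows "(\<integral>\<^sup>+ x. indicator (ball (0::'a::euclidean_space) (R*2^N) - ball 0 R) x * ennreal (norm x powr (- real DIM('a))) \<partial>lborel)
     \<ge> of_nat N * ennreal (unit_ball_vol (DIM('a)) * (1 - 1/2^DIM('a)))"
proof (induction N)
  case 0
  then show ?case by simp
next
  case (Suc N)
  define g where "g = (\<lambda>x::'a. ennreal (norm x powr (- real DIM('a))))"
  have gm: "g \<in> borel_measurable lborel" unfolding g_def by measurable
  have ind: "indicator (ball (0::'a) (R*2^Suc N) - ball 0 R) x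
      = indicator (ball (0::'a) (R*2^N) - ball 0 R) x + (indicator (ball (0::'a) (2*(R*2^N)) - ball 0 (R*2^N)) x :: ennreal)" for x
  proof -
    have "R \<le> R*2^N" "R*2^N \<le> R*(2*2^N)" using R by simp_all
    then show ?thesis by (auto simp: indicator_def)
  qed
  have "(\<integral>\<^sup>+ x. indicator (ball (0::'a) (R*2^Suc N) - ball 0 R) x * g x \<partial>lborel)
     = (\<integral>\<^sup>+ x. indicator (ball (0::'a) (R*2^N) - ball 0 R) x * g x + indicator (ball (0::'a) (2*(R*2^N)) - ball 0 (R*2^N)) x * g x \<partial>lborel)"
    by (rule nn_integral_cong) (simp only: ind distrib_right)
  also have "\<dots> = (\<integral>\<^sup>+ x. indicator (ball (0::'a) (R*2^N) - ball 0 R) x * g x \<partial>lborel) + (\<integral>\<^sup>+ x. indicator (ball (0::'a) (2*(R*2^N)) - ball 0 (R*2^N)) x * g x \<partial>lborel)"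
    using gm by (intro nn_integral_add) (auto intro!: borel_measurable_times_ennreal borel_measurable_indicator)
  finally have eq: "(\<integral>\<^sup>+ x. indicator (ball (0::'a) (R*2^Suc N) - ball 0 R) x * g x \<partial>lborel) = \<dots>" .
  have "of_nat (Suc N) * ennreal (unit_ball_vol (DIM('a)) * (1 - 1/2^DIM('a)))
     = of_nat N * ennreal (unit_ball_vol (DIM('a)) * (1 - 1/2^DIM('a))) + ennreal (unit_ball_vol (DIM('a)) * (1 - 1/2^DIM('a)))"
    by (simp add: distrib_right)
  also have "\<dots> \<le> (\<integral>\<^sup>+ x. indicator (ball (0::'a) (R*2^N) - ball 0 R) x * g x \<partial>lborel) + (\<integral>\<^sup>+ x. indicator (ball (0::'a) (2*(R*2^N)) - ball 0 (R*2^N)) x * g x \<partial>lborel)"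
    using Suc annulus_int[of "R*2^N", where 'a='a] R unfolding g_def by (intro add_mono) auto
  finally show ?case using eq unfolding g_def by simp
qed

lemma exterior_infinite:
  fixes R :: real
  assumes R: "R > 0"
  shows "(\<integral>\<^sup>+ x. indicator {x::'a::euclidean_space. R \<le> norm x} x * ennreal (norm x powr (- real DIM('a))) \<partial>lborel) = \<infinity>"
proof (rule ccontr)
  define I where "I = (\<integral>\<^sup>+ x. indicator {x::'a::euclidean_space. R \<le> norm x} x * ennreal (norm x powr (- real DIM('a))) \<partial>lborel)"
  define \<delta> where "\<delta> = unit_ball_vol (DIM('a)) * (1 - 1/2^DIM('a))"
  have \<delta>: "\<delta> > 0" unfolding \<delta>_def by (simp add: field_simps)
  assume "\<not> ?thesis"
  then obtain r where r: "I = ennreal r" "r \<ge> 0" unfolding I_def[symmetric] by (cases I) auto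
  obtain N :: nat where N: "real N > r / \<delta>" using reals_Archimedean2 by blast
  have "of_nat N * ennreal \<delta> \<le> I"
  proof -
    have "of_nat N * ennreal \<delta> \<le> (\<integral>\<^sup>+ x. indicator (ball (0::'a) (R*2^N) - ball 0 R) x * ennreal (norm x powr (- real DIM('a))) \<partial>lborel)"
      using annulus_sum[OF R, of N, where 'a='a] unfolding \<delta>_def by simp
    also have "\<dots> \<le> I" unfolding I_def
      by (rule nn_integral_mono) (auto simp: indicator_def)
    finally show ?thesis .
  qed
  then have "ennreal (real N * \<delta>) \<le> ennreal r" using r \<delta> by (simp add: ennreal_mult ennreal_of_nat_eq_real_of_nat)
  then have "real N * \<delta> \<le> r" using r by simp
  then show False using N \<delta> by (simp add: field_simps)
qed

lemma ball_int_mono: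
  assumes "ball x s \<subseteq> ball z t"
  shows "ball_int f x s \<le> ball_int f z t"
  unfolding ball_int_def
  by (rule nn_integral_mono) (use assms in \<open>auto simp: indicator_def\<close>)

lemma wolff_point:
  fixes f :: "real^'n::finite \<Rightarrow> real" and x :: "real^'n"
  assumes m: "\<beta>*\<gamma> < real CARD('n)" and g: "\<gamma> > 1"
    and A: "A > 0" "ennreal A \<le> ball_int f 0 1"
    and x: "norm x \<ge> 1"
  shows "wolff \<beta> \<gamma> f x \<ge> ennreal (A powr (1/(\<gamma>-1)) / 2 * 4 powr (-((real CARD('n) - \<beta>*\<gamma>)/(\<gamma>-1))) * norm x powr (-((real CARD('n) - \<beta>*\<gamma>)/(\<gamma>-1))))"
proof -
  define m where "m = real CARD('n) - \<beta>*\<gamma>"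
  define e where "e = m / (\<gamma>-1)"
  define T where "T = norm x + 1"
  have m0: "m > 0" using m unfolding m_def by simp
  have e0: "e > 0" using m0 g unfolding e_def by simp
  have T1: "T \<ge> 2" "T \<le> 2 * norm x" using x unfolding T_def by auto
  define b where "b = (A / (2*T) powr m) powr (1/(\<gamma>-1)) / (2*T)"
  have b0: "b \<ge> 0" unfolding b_def using T1 A by simp
  have pt: "ennreal b * indicator {T<..<2*T} t \<le> indicator {0<..} t *
       (if ball_int f x t = \<infinity> then \<infinity>
        else ennreal ((enn2real (ball_int f x t) / t powr (real CARD('n) - \<beta> * \<gamma>))
                        powr (1 / (\<gamma> - 1)) / t))" for t
  proof (cases "t \<in> {T<..<2*T}")
    case True
    then have t: "t > T" "t < 2*T" by auto
    then have t0: "t > 0" using T1 by simp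
    show ?thesis
    proof (cases "ball_int f x t = \<infinity>")
      case False
      have "ball 0 1 \<subseteq> ball x t"
      proof
        fix y :: "real^'n" assume "y \<in> ball 0 1"
        then have "norm y < 1" by simp
        moreover have "dist x y \<le> norm x + norm y" by (simp add: dist_norm norm_triangle_ineq4)
        ultimately have "dist x y < t" using t unfolding T_def by linarith
        then show "y \<in> ball x t" by simp
      qed
      then have "ennreal A \<le> ball_int f x t" using A(2) ball_int_mono order_trans by blast
      then have BA: "enn2real (ball_int f x t) \<ge> A" using False A
        using enn2real_mono[of "ennreal A" "ball_int f x t"] by (simp add: top.not_eq_extremum)
      have "A / (2*T) powr m \<le> enn2real (ball_int f x t) / t powr m"
        using BA t t0 m0 A by (intro frac_le powr_mono2) auto
      then have "(A / (2*T) powr m) powr (1/(\<gamma>-1)) \<le> (enn2real (ball_int f x t) / t powr m) powr (1/(\<gamma>-1))"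
        using g A T1 by (intro powr_mono2) auto
      then have "b \<le> (enn2real (ball_int f x t) / t powr m) powr (1/(\<gamma>-1)) / t"
        unfolding b_def using t t0 by (intro frac_le) auto
      then show ?thesis using True t0 False by (simp add: m_def ennreal_leI)
    qed (use t0 True in auto)
  qed auto
  have "ennreal (b * T) = ennreal b * emeasure lborel {T<..<2*T}"
    using T1 b0 by (simp add: ennreal_mult)
  also have "\<dots> = (\<integral>\<^sup>+ t. ennreal b * indicator {T<..<2*T} t \<partial>lborel)"
    by (simp add: nn_integral_cmult_indicator)
  also have "\<dots> \<le> wolff \<beta> \<gamma> f x"
    unfolding wolff_def by (rule nn_integral_mono) (rule pt)
  finally have W: "ennreal (b * T) \<le> wolff \<beta> \<gamma> f x" .
  have "b * T = A powr (1/(\<gamma>-1)) / 2 * (2*T) powr (-e)"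
  proof -
    have "(A / (2*T) powr m) powr (1/(\<gamma>-1)) = A powr (1/(\<gamma>-1)) / (2*T) powr e"
      using A T1 by (simp add: powr_divide powr_powr e_def)
    then show ?thesis unfolding b_def using T1 by (simp add: powr_minus field_simps)
  qed
  also have "(2*T) powr (-e) \<ge> (4 * norm x) powr (-e)"
    using T1 e0 by (intro powr_mono2') auto
  then have "A powr (1/(\<gamma>-1)) / 2 * (4 * norm x) powr (-e) \<le> A powr (1/(\<gamma>-1)) / 2 * (2*T) powr (-e)"
    by (intro mult_left_mono) auto
  moreover have "(4 * norm x) powr (-e) = 4 powr (-e) * norm x powr (-e)"
    by (simp add: powr_mult)
  ultimately have "A powr (1/(\<gamma>-1)) / 2 * 4 powr (-e) * norm x powr (-e) \<le> b * T"
    by (simp add: mult.assoc)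
  then have "ennreal (A powr (1/(\<gamma>-1)) / 2 * 4 powr (-e) * norm x powr (-e)) \<le> wolff \<beta> \<gamma> f x"
    using W order_trans ennreal_leI by blast
  then show ?thesis unfolding e_def m_def .
qed
lemma AE_ball_ex:
  fixes z :: "'a::euclidean_space"
  assumes "AE x in lborel. P x" "r > 0"
  shows "\<exists>x\<in>ball z r. P x"
proof (rule ccontr)
  assume "\<not> ?thesis"
  then have "AE x in lborel. x \<notin> ball z r" using assms(1) by (auto elim!: AE_mp)
  then have "emeasure lborel (ball z r) = 0"
    by (subst (asm) AE_iff_measurable[of "ball z r"]) auto
  then show False using assms(2) unit_ball_vol_pos[of "real DIM('a)"] by (simp add: emeasure_ball)
qed

theorem proposition5:
  fixes \<beta> \<gamma> p q \<sigma>1 \<sigma>2 :: real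
    and c1 c2 u v :: "real^'n::finite \<Rightarrow> real"
  defines "n \<equiv> real CARD('n)"
  defines "q0 \<equiv> (\<beta>*\<gamma>*(\<gamma>-1+q) + (\<gamma>-1)*\<sigma>1 + \<sigma>2*q) / (p*q - (\<gamma>-1)^2)"
  defines "p0 \<equiv> (\<beta>*\<gamma>*(\<gamma>-1+p) + (\<gamma>-1)*\<sigma>2 + \<sigma>1*p) / (p*q - (\<gamma>-1)^2)"
  assumes n3: "CARD('n) \<ge> 3"
    and "\<beta> > 0" and "\<gamma> > 1" and "\<beta> * \<gamma> < n"
    and "p > 0" and "q > 0" and "q \<ge> p" and "p * q > (\<gamma>-1)^2"
    and "\<sigma>1 > - \<beta> * \<gamma>" and "\<sigma>2 > - \<beta> * \<gamma>" and "\<sigma>1 \<le> \<sigma>2"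
    and "q0 + p0 \<le> (n - \<beta>*\<gamma>) / (\<gamma> - 1)"
    and "double_bounded c1" and "double_bounded c2"
    \<comment> \<open>positive solution\<close>
    and upos: "\<forall>x. u x > 0" and vpos: "\<forall>x. v x > 0"
    and "locally_L1 u" and "locally_L1 v"
    and equ: "AE x in lborel. ennreal (u x) =
                 ennreal (c1 x) * wolff \<beta> \<gamma> (\<lambda>y. norm y powr \<sigma>1 * v y powr q) x"
    and eqv: "AE x in lborel. ennreal (v x) =
                 ennreal (c2 x) * wolff \<beta> \<gamma> (\<lambda>y. norm y powr \<sigma>2 * u y powr p) x"
    \<comment> \<open>bounded\<close>
    and bdd: "\<exists>M. \<forall>x. u x \<le> M \<and> v x \<le> M"
    \<comment> \<open>decaying\<close>
    and dec: "\<exists>\<theta>1>0. \<exists>\<theta>2>0. asymp_equiv_large u (\<lambda>x. norm x powr (-\<theta>1)) \<and>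
                                  asymp_equiv_large v (\<lambda>x. norm x powr (-\<theta>2))"
    \<comment> \<open>optimal integrable\<close>
    and intu: "\<forall>r. r > n*(\<gamma>-1)/(n-\<beta>*\<gamma>) \<longrightarrow> integrable lborel (\<lambda>x. \<bar>u x\<bar> powr r)"
    and intv: "\<forall>s. s > max (n*(\<gamma>-1)/(n-\<beta>*\<gamma>))
                         (n*(\<gamma>-1)/(p*(n-\<beta>*\<gamma>)/(\<gamma>-1) - (\<beta>*\<gamma>+\<sigma>2)))
                 \<longrightarrow> integrable lborel (\<lambda>x. \<bar>v x\<bar> powr s)"
  shows "asymp_equiv_large u (\<lambda>x. norm x powr (-((n - \<beta>*\<gamma>)/(\<gamma>-1))))"
proof -
  define e where "e = (n - \<beta>*\<gamma>)/(\<gamma>-1)"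
  have e0: "e > 0" using assms(6,7) unfolding e_def by simp
  have nCARD: "real DIM(real^'n) = n" unfolding n_def by simp
  from dec obtain \<theta>1 \<theta>2 where th: "\<theta>1 > 0" "asymp_equiv_large u (\<lambda>x. norm x powr (-\<theta>1))"
    by blast
  then obtain c R where cR: "c > 0" "\<And>x. norm x \<ge> R \<Longrightarrow> 1/c \<le> u x / norm x powr (-\<theta>1) \<and> u x / norm x powr (-\<theta>1) \<le> c"
    unfolding asymp_equiv_large_def by blast
  have ubounds: "norm x powr (-\<theta>1) / c \<le> u x \<and> u x \<le> c * norm x powr (-\<theta>1)" if "norm x \<ge> max R 1" for x
  proof -
    have p: "norm x powr (-\<theta>1) > 0" using that by (subgoal_tac "norm x > 0") auto
    from cR(2)[of x] that have "1/c \<le> u x / norm x powr (-\<theta>1)" "u x / norm x powr (-\<theta>1) \<le> c" by auto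
    then show ?thesis using p cR(1) by (auto simp: field_simps)
  qed
  have ge: "\<theta>1 \<ge> e"
  proof (rule ccontr)
    assume "\<not> \<theta>1 \<ge> e"
    then have lt: "\<theta>1 < e" by simp
    define r where "r = n / \<theta>1"
    have n0: "n > 0" unfolding n_def using n3 by simp
    have "n*(\<gamma>-1)/(n-\<beta>*\<gamma>) = n / e" unfolding e_def using assms(6,7) by (simp add: field_simps)
    also have "\<dots> < r" unfolding r_def using lt th(1) n0 by (intro divide_strict_left_mono) auto
    finally have "integrable lborel (\<lambda>x. \<bar>u x\<bar> powr r)" using intu by blast
    then have fin: "(\<integral>\<^sup>+ x. ennreal (\<bar>u x\<bar> powr r) \<partial>lborel) \<noteq> \<infinity>" by blast
    have r0: "r > 0" unfolding r_def using n0 th(1) by simp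
    have pt: "ennreal (c powr (-r)) * (indicator {x::real^'n. max R 1 \<le> norm x} x * ennreal (norm x powr (- real DIM(real^'n))))
       \<le> ennreal (\<bar>u x\<bar> powr r)" for x
    proof (cases "max R 1 \<le> norm x")
      case True
      then have nx: "norm x \<ge> 1" by simp
      have "norm x powr (-\<theta>1) / c \<le> \<bar>u x\<bar>" using ubounds[OF True] by (meson abs_ge_self order_trans)
      then have "(norm x powr (-\<theta>1) / c) powr r \<le> \<bar>u x\<bar> powr r"
        using r0 cR(1) by (intro powr_mono2) auto
      moreover have "(norm x powr (-\<theta>1) / c) powr r = c powr (-r) * norm x powr (- n)"
      proof -
        have "(norm x powr (-\<theta>1)) powr r = norm x powr (- n)"
          using th(1) unfolding r_def by (simp add: powr_powr)
        moreover have "(norm x powr (-\<theta>1) / c) powr r = (norm x powr (-\<theta>1)) powr r / c powr r"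
          using cR(1) by (intro powr_divide)
        moreover have "c powr (-r) = 1 / c powr r" by (simp add: powr_minus divide_inverse)
        ultimately show ?thesis by simp
      qed
      ultimately show ?thesis using True nCARD
        by (simp add: ennreal_mult'[symmetric] ennreal_leI)
    qed simp
    have "\<infinity> = ennreal (c powr (-r)) * (\<integral>\<^sup>+ x. indicator {x::real^'n. max R 1 \<le> norm x} x * ennreal (norm x powr (- real DIM(real^'n))) \<partial>lborel)"
      using exterior_infinite[of "max R 1", where 'a="real^'n"] cR(1) by simp
    also have "\<dots> = (\<integral>\<^sup>+ x. ennreal (c powr (-r)) * (indicator {x::real^'n. max R 1 \<le> norm x} x * ennreal (norm x powr (- real DIM(real^'n)))) \<partial>lborel)"
      by (rule nn_integral_cmult[symmetric]) measurable
    also have "\<dots> \<le> (\<integral>\<^sup>+ x. ennreal (\<bar>u x\<bar> powr r) \<partial>lborel)"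
      by (rule nn_integral_mono) (rule pt)
    finally show False using fin by (simp add: top_unique)
  qed
  have le: "\<theta>1 \<le> e"
  proof (rule ccontr)
    assume "\<not> \<theta>1 \<le> e"
    then have gt: "\<theta>1 > e" by simp
    define f where "f = (\<lambda>y::real^'n. norm y powr \<sigma>1 * v y powr q)"
    have vm: "v \<in> borel_measurable lborel" using assms(21) unfolding locally_L1_def by simp
    have fm: "f \<in> borel_measurable lborel" unfolding f_def using vm by measurable
    have Bpos: "ball_int f 0 1 \<noteq> 0"
    proof
      assume "ball_int f 0 1 = 0"
      then have ae0: "AE y in lborel. indicator (ball (0::real^'n) 1) y * ennreal (f y) = 0"
        unfolding ball_int_def using fm by (subst (asm) nn_integral_0_iff_AE) (auto intro!: borel_measurable_times_ennreal borel_measurable_indicator)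
      obtain z :: "real^'n" where z: "norm z = 1/2" using vector_choose_size[of "1/2"] by auto
      obtain y where y: "y \<in> ball z (1/4)" "indicator (ball (0::real^'n) 1) y * ennreal (f y) = 0"
        using AE_ball_ex[OF ae0, of "1/4" z] by auto
      have "dist z y < 1/4" using y by simp
      moreover have "norm z \<le> norm y + dist z y" using norm_triangle_sub[of z y] by (simp add: dist_norm)
      moreover have "norm y \<le> norm z + dist z y" using norm_triangle_sub[of y z] by (simp add: dist_norm norm_minus_commute)
      ultimately have "norm y > 1/4" "norm y < 1" using z by linarith+
      then have "f y > 0" unfolding f_def using vpos[rule_format, of y] \<open>norm y > 1/4\<close> by (intro mult_pos_pos) (auto simp del: powr_gt_zero, auto)
      then show False using y \<open>norm y < 1\<close> by simp
    qed
    obtain A where A: "A > 0" "ennreal A \<le> ball_int f 0 1"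
    proof (cases "ball_int f 0 1 = \<infinity>")
      case True then show ?thesis using that[of 1] by simp
    next
      case False
      then show ?thesis using that[of "enn2real (ball_int f 0 1)"] Bpos
        by (simp add: enn2real_positive_iff top.not_eq_extremum zero_less_iff_neq_zero)
    qed
    define K where "K = A powr (1/(\<gamma>-1)) / 2 * 4 powr (-e)"
    have K0: "K > 0" unfolding K_def using A by simp
    obtain C1 where C1: "C1 > 0" "\<And>x. 1/C1 \<le> c1 x"
      using assms(16) unfolding double_bounded_def by blast
    have lower: "AE x in lborel. norm x \<ge> 1 \<longrightarrow> K / C1 * norm x powr (-e) \<le> u x"
      using equ
    proof (rule AE_mp, intro AE_I2 impI)
      fix x :: "real^'n"
      assume eq: "ennreal (u x) = ennreal (c1 x) * wolff \<beta> \<gamma> (\<lambda>y. norm y powr \<sigma>1 * v y powr q) x"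
        and nx: "norm x \<ge> 1"
      have W: "ennreal (K * norm x powr (-e)) \<le> wolff \<beta> \<gamma> f x"
        using wolff_point[of \<beta> \<gamma> A f x] assms(7,6) A nx unfolding K_def e_def n_def
        by (simp add: mult.assoc)
      have "ennreal (K / C1 * norm x powr (-e)) = ennreal (1/C1) * ennreal (K * norm x powr (-e))"
        using C1 K0 by (simp add: ennreal_mult[symmetric])
      also have "\<dots> \<le> ennreal (c1 x) * wolff \<beta> \<gamma> f x"
        using C1(2)[of x] W by (intro mult_mono) (auto intro: ennreal_leI)
      also have "\<dots> = ennreal (u x)" using eq unfolding f_def by simp
      finally show "K / C1 * norm x powr (-e) \<le> u x" using upos
        by (simp add: ennreal_le_iff less_imp_le)
    qed
    define X where "X = (c * C1 / K + 1) powr (1/(\<theta>1-e))"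
    have "c * C1 / K + 1 > 0" using cR(1) C1(1) K0 by (simp add: add_pos_pos)
    then have X0: "X > 0" unfolding X_def by simp
    define M where "M = max (max R 1) X"
    obtain z :: "real^'n" where z: "norm z = M + 1" proof -
      have "M + 1 \<ge> 0" unfolding M_def by simp
      then show ?thesis using vector_choose_size[of "M+1"] that by blast
    qed
    obtain x where x: "x \<in> ball z 1" "norm x \<ge> 1 \<longrightarrow> K / C1 * norm x powr (-e) \<le> u x"
      using AE_ball_ex[OF lower, of 1 z] by auto
    have "dist z x < 1" using x by simp
    moreover have "norm z \<le> norm x + dist z x" using norm_triangle_sub[of z x] by (simp add: dist_norm)
    ultimately have nxM: "norm x \<ge> M" using z by linarith
    then have nx1: "norm x \<ge> max R 1" "norm x \<ge> X" unfolding M_def by auto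
    then have nx0: "norm x > 0" by linarith
    have nxo: "norm x \<ge> 1" using nx1(1) by simp
    have l1: "K / C1 * norm x powr (-e) \<le> u x" using x(2) nxo by blast
    have l2: "u x \<le> c * norm x powr (-\<theta>1)" using ubounds[OF nx1(1)] by blast
    have "K / C1 * norm x powr (-e) \<le> c * norm x powr (-\<theta>1)"
      using l1 l2 by (rule order_trans)
    then have "K / C1 * norm x powr (-e) * norm x powr \<theta>1 \<le> c * norm x powr (-\<theta>1) * norm x powr \<theta>1"
      by (intro mult_right_mono) auto
    moreover have "norm x powr (-e) * norm x powr \<theta>1 = norm x powr (\<theta>1 - e)"
      using powr_add[of "norm x" "-e" "\<theta>1"] by simp
    moreover have "norm x powr (-\<theta>1) * norm x powr \<theta>1 = 1"
      using powr_add[of "norm x" "-\<theta>1" "\<theta>1"] nx0 by simp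
    ultimately have "K / C1 * norm x powr (\<theta>1 - e) \<le> c"
      by (simp add: mult.assoc)
    moreover have "norm x powr (\<theta>1 - e) \<ge> X powr (\<theta>1 - e)"
      using nx1 X0 gt by (intro powr_mono2) auto
    moreover have "X powr (\<theta>1 - e) = c * C1 / K + 1"
      unfolding X_def using gt cR(1) C1 K0 by (simp add: powr_powr)
    moreover have "K / C1 \<ge> 0" using K0 C1(1) by simp
    ultimately have "K / C1 * (c * C1 / K + 1) \<le> K / C1 * norm x powr (\<theta>1 - e)"
      by (metis mult_left_mono)
    then have "K / C1 * (c * C1 / K + 1) \<le> c" using \<open>K / C1 * norm x powr (\<theta>1 - e) \<le> c\<close> by linarith
    moreover have "K / C1 * (c * C1 / K + 1) = c + K / C1" using K0 C1(1) by (simp add: field_simps)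
    moreover have "K / C1 > 0" using K0 C1(1) by simp
    ultimately show False by linarith
  qed
  have "\<theta>1 = e" using ge le by simp
  then show ?thesis using th(2) unfolding e_def by simp
qed

end
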